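(* Let $N,G,N_t,K$ be positive integers ($K\ge 0$ integer), $T_s>0$, $\sigma>0$, and let $\boldsymbol s^{(g,n)}\in\mathbb C^{N_t}$ be known pilot vectors for $g=1,\dots,G$, $n=0,\dots,N-1$. Let $\boldsymbol\alpha(\theta)\triangleq[1,e^{-j\pi\sin\theta},\dots,e^{-j\pi(N_t-1)\sin\theta}]^{\mathrm T}\in\mathbb C^{N_t}$. For unknown deterministic parameters $\boldsymbol\tau^\star=[\tau^\star_0,\dots,\tau^\star_K]^{\mathrm T}$, $\boldsymbol\theta^\star_{\mathrm{Tx}}=[\theta^\star_{\mathrm{Tx},0},\dots,\theta^\star_{\mathrm{Tx},K}]^{\mathrm T}$, $\boldsymbol\gamma^\star=[\gamma^\star_0,\dots,\gamma^\star_K]^{\mathrm T}\in\mathbb C^{K+1}$ and $\boldsymbol\Delta=[\Delta_\tau,\Delta_\theta]^{\mathrm T}$, define $$\boldsymbol h^{(n)}=\sum_{k=0}^K\gamma^\star_k e^{-j2\pi n\tau^\star_k/(NT_s)}\boldsymbol\alpha(\theta^\star_{\mathrm{Tx},k})^{\mathrm H},\qquad \boldsymbol\Phi^{(n)}=e^{-j2\pi n\Delta_\tau/(NT_s)}\operatorname{diag}\big(\boldsymbol\alpha(\Delta_\theta)^{\mathrm H}\big),$$ and noise-free observations $u^{(g,n)}=\boldsymbol h^{(n)}\boldsymbol\Phi^{(n)}\boldsymbol s^{(g,n)}$, observed in i.i.d. $\mathcal{CN}(0,\sigma^2)$ noise. Let $\boldsymbol\chi=[(\boldsymbol\tau^\star)^{\mathrm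 T},(\boldsymbol\theta^\star_{\mathrm{Tx}})^{\mathrm T},\mathfrak R\{\boldsymbol\gamma^\star\}^{\mathrm T},\mathfrak I\{\boldsymbol\gamma^\star\}^{\mathrm T},\boldsymbol\Delta^{\mathrm T}]^{\mathrm T}\in\mathbb R^{4K+6}$ and let $$\boldsymbol J_{\boldsymbol\chi}=\frac{2}{\sigma^2}\sum_{n=0}^{N-1}\sum_{g=1}^G\mathfrak R\Big\{\big(\nabla_{\boldsymbol\chi}u^{(g,n)}\big)^{*}\big(\nabla_{\boldsymbol\chi}u^{(g,n)}\big)^{\mathrm T}\Big\}\in\mathbb R^{(4K+6)\times(4K+6)}$$ be the associated Fisher information matrix. Then $\boldsymbol J_{\boldsymbol\chi}$ is singular.
   Context: $\nabla_{\boldsymbol\chi}u^{(g,n)}$ denotes the column vector of partial derivatives of $u^{(g,n)}$ with respect to the entries of $\boldsymbol\chi$; $(\cdot)^*$ is entrywise complex conjugation and $(\cdot)^{\mathrm H}$ the conjugate transpose. This models an eavesdropper who knows the structure of the precoder $\boldsymbol\Phi^{(n)}$ but not the shift parameters $\boldsymbol\Delta$. *)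

theory Defs
  imports Complex_Main "Jordan_Normal_Form.Determinant"
begin

definition cderiv :: "(real \<Rightarrow> complex) \<Rightarrow> real \<Rightarrow> complex" where
  "cderiv f t = (SOME v. (f has_vector_derivative v) (at t))"

definition steer :: "real \<Rightarrow> nat \<Rightarrow> complex" where
  "steer \<theta> i = exp (- \<i> * complex_of_real (pi * real i * sin \<theta>))"

text \<open>Noise-free observation u^(g,n) as a function of the parameter vector chi
  (indexed 0..4K+5): tau_k = chi k, theta_k = chi (K+1+k),
  Re gamma_k = chi (2K+2+k), Im gamma_k = chi (3K+3+k),
  Delta_tau = chi (4K+4), Delta_theta = chi (4K+5).
  u = h^(n) Phi^(n) s^(g,n) written out entrywise, with
  h^(n)_i = sum_k gamma_k e^{-j 2 pi n tau_k/(N Ts)} conj(alpha(theta_k)_i) and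
  Phi^(n) = e^{-j 2 pi n Delta_tau/(N Ts)} diag(conj(alpha(Delta_theta))).\<close>
definition obs ::
  "nat \<Rightarrow> nat \<Rightarrow> nat \<Rightarrow> real \<Rightarrow> (nat \<Rightarrow> nat \<Rightarrow> nat \<Rightarrow> complex)
     \<Rightarrow> nat \<Rightarrow> nat \<Rightarrow> (nat \<Rightarrow> real) \<Rightarrow> complex" where
  "obs N Nt K Ts s g n \<chi> =
     (let \<tau> = (\<lambda>k. \<chi> k); \<theta> = (\<lambda>k. \<chi> (K + 1 + k));
          \<gamma> = (\<lambda>k. Complex (\<chi> (2*K + 2 + k)) (\<chi> (3*K + 3 + k)));
          d\<tau> = \<chi> (4*K + 4); d\<theta> = \<chi> (4*K + 5);
          h = (\<lambda>i. \<Sum>k\<le>K. \<gamma> k * exp (- \<i> * complex_of_real (2 * pi * real n * \<tau> k / (real N * Ts)))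
                              * cnj (steer (\<theta> k) i));
          \<Phi> = (\<lambda>i. exp (- \<i> * complex_of_real (2 * pi * real n * d\<tau> / (real N * Ts)))
                    * cnj (steer d\<theta> i))
      in \<Sum>i<Nt. h i * \<Phi> i * s g n i)"

definition grad_obs ::
  "nat \<Rightarrow> nat \<Rightarrow> nat \<Rightarrow> real \<Rightarrow> (nat \<Rightarrow> nat \<Rightarrow> nat \<Rightarrow> complex)
     \<Rightarrow> nat \<Rightarrow> nat \<Rightarrow> (nat \<Rightarrow> real) \<Rightarrow> nat \<Rightarrow> complex" where
  "grad_obs N Nt K Ts s g n \<chi> j = cderiv (\<lambda>t. obs N Nt K Ts s g n (\<chi>(j := t))) (\<chi> j)"

definition FIM ::
  "nat \<Rightarrow> nat \<Rightarrow> nat \<Rightarrow> nat \<Rightarrow> real \<Rightarrow> real \<Rightarrow> (nat \<Rightarrow> nat \<Rightarrow> nat \<Rightarrow> complex)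
     \<Rightarrow> (nat \<Rightarrow> real) \<Rightarrow> real mat" where
  "FIM N G Nt K Ts \<sigma> s \<chi> =
     mat (4*K + 6) (4*K + 6) (\<lambda>(a, b).
        2 / \<sigma>\<^sup>2 * (\<Sum>n<N. \<Sum>g\<in>{1..G}.
           Re (cnj (grad_obs N Nt K Ts s g n \<chi> a) * grad_obs N Nt K Ts s g n \<chi> b)))"

end

theory Submission
  imports Defs
begin

lemma cderiv_eq:
  assumes "(f has_vector_derivative v) (at t)"
  shows "cderiv f t = v"
proof -
  have uq: "w = v" if "(f has_vector_derivative w) (at t)" for w
  proof -
    have "(\<lambda>h. h *\<^sub>R w) = (\<lambda>h. h *\<^sub>R v)"
      using has_derivative_unique that assms unfolding has_vector_derivative_def by blast
    then show ?thesis by (metis scaleR_one)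
  qed
  show ?thesis unfolding cderiv_def using assms uq by (rule some_equality)
qed

definition EE :: "nat \<Rightarrow> nat \<Rightarrow> real \<Rightarrow> real \<Rightarrow> complex" where
  "EE N n Ts x = exp (- \<i> * complex_of_real (2 * pi * real n * x / (real N * Ts)))"

lemma exp_lin_deriv:
  fixes c :: complex and x :: real
  shows "((\<lambda>z. exp (- \<i> * (c * z))) has_field_derivative
          exp (- \<i> * (c * of_real x)) * (- \<i> * c)) (at (of_real x))"
  by (auto intro!: derivative_eq_intros)

lemma EE_deriv:
  "((\<lambda>t. EE N n Ts t) has_vector_derivative
     (- \<i> * of_real (2 * pi * real n / (real N * Ts)) * EE N n Ts x)) (at x)"
proof -
  let ?c = "complex_of_real (2 * pi * real n / (real N * Ts))"
  have "((\<lambda>z. exp (- \<i> * (?c * z))) has_field_derivative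
          exp (- \<i> * (?c * of_real x)) * (- \<i> * ?c)) (at (of_real x))"
    by (rule exp_lin_deriv)
  from has_vector_derivative_real_field[OF this]
  have "((\<lambda>t. exp (- \<i> * (?c * of_real t))) has_vector_derivative
          exp (- \<i> * (?c * of_real x)) * (- \<i> * ?c)) (at x)" .
  moreover have eq: "\<And>t. exp (- \<i> * (?c * of_real t)) = EE N n Ts t"
  proof -
    fix t
    have "2 * pi * real n * t / (real N * Ts) = (2 * pi * real n / (real N * Ts)) * t" by simp
    then show "exp (- \<i> * (?c * of_real t)) = EE N n Ts t"
      unfolding EE_def by (metis of_real_mult)
  qed
  ultimately have "(EE N n Ts has_vector_derivative EE N n Ts x * (- \<i> * ?c)) (at x)"
    by (simp only: eq flip: fun_eq_iff)
  then show ?thesis by (simp only: mult.commute)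
qed

definition QQ :: "nat \<Rightarrow> nat \<Rightarrow> (nat \<Rightarrow> nat \<Rightarrow> nat \<Rightarrow> complex) \<Rightarrow> nat \<Rightarrow> nat \<Rightarrow> (nat \<Rightarrow> real) \<Rightarrow> nat \<Rightarrow> complex" where
  "QQ Nt K s g n \<chi> k = (\<Sum>i<Nt. Complex (\<chi> (2*K + 2 + k)) (\<chi> (3*K + 3 + k))
       * cnj (steer (\<chi> (K + 1 + k)) i) * cnj (steer (\<chi> (4*K + 5)) i) * s g n i)"

lemma obs_form:
  "obs N Nt K Ts s g n \<chi> =
     EE N n Ts (\<chi> (4*K+4)) * (\<Sum>k\<le>K. EE N n Ts (\<chi> k) * QQ Nt K s g n \<chi> k)"
  unfolding obs_def QQ_def EE_def Let_def
  by (simp add: sum_distrib_left sum_distrib_right mult_ac sum.swap[of _ "{..<Nt}"])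

lemma QQ_upd:
  assumes "j \<le> K \<or> j = 4*K+4" "k \<le> K"
  shows "QQ Nt K s g n (\<chi>(j := t)) k = QQ Nt K s g n \<chi> k"
  using assms unfolding QQ_def by auto

abbreviation cc :: "nat \<Rightarrow> nat \<Rightarrow> real \<Rightarrow> complex" where
  "cc N n Ts \<equiv> - \<i> * of_real (2 * pi * real n / (real N * Ts))"

lemma affine_EE_deriv:
  "((\<lambda>t. A * EE N n Ts t + C) has_vector_derivative A * (cc N n Ts * EE N n Ts x)) (at x)"
  unfolding has_vector_derivative_add_const
  by (intro has_vector_derivative_mult_right EE_deriv)

lemma grad_tau:
  assumes "k0 \<le> K"
  shows "grad_obs N Nt K Ts s g n \<chi> k0 =
     (EE N n Ts (\<chi> (4*K+4)) * QQ Nt K s g n \<chi> k0) * (cc N n Ts * EE N n Ts (\<chi> k0))"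
proof -
  let ?A = "EE N n Ts (\<chi> (4*K+4)) * QQ Nt K s g n \<chi> k0"
  let ?C = "EE N n Ts (\<chi> (4*K+4)) * (\<Sum>k\<in>{..K} - {k0}. EE N n Ts (\<chi> k) * QQ Nt K s g n \<chi> k)"
  have "obs N Nt K Ts s g n (\<chi>(k0 := t)) = ?A * EE N n Ts t + ?C" for t
  proof -
    have s1: "(\<Sum>k\<le>K. EE N n Ts ((\<chi>(k0 := t)) k) * QQ Nt K s g n (\<chi>(k0 := t)) k)
       = (\<Sum>k\<le>K. EE N n Ts ((\<chi>(k0 := t)) k) * QQ Nt K s g n \<chi> k)"
      by (rule sum.cong) (use assms QQ_upd in auto)
    also have "\<dots> = EE N n Ts t * QQ Nt K s g n \<chi> k0 +
        (\<Sum>k\<in>{..K} - {k0}. EE N n Ts (\<chi> k) * QQ Nt K s g n \<chi> k)"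
      using assms by (subst sum.remove[of _ k0]) (auto intro!: sum.cong)
    finally show ?thesis using assms unfolding obs_form
      by (simp add: algebra_simps)
  qed
  then have "(\<lambda>t. obs N Nt K Ts s g n (\<chi>(k0 := t))) = (\<lambda>t. ?A * EE N n Ts t + ?C)"
    by auto
  then show ?thesis unfolding grad_obs_def
    by (simp only:) (rule cderiv_eq[OF affine_EE_deriv])
qed

lemma grad_dtau:
  shows "grad_obs N Nt K Ts s g n \<chi> (4*K+4) = cc N n Ts * obs N Nt K Ts s g n \<chi>"
proof -
  let ?A = "(\<Sum>k\<le>K. EE N n Ts (\<chi> k) * QQ Nt K s g n \<chi> k)"
  have "obs N Nt K Ts s g n (\<chi>(4*K+4 := t)) = ?A * EE N n Ts t + 0" for t
  proof -
    have "(\<Sum>k\<le>K. EE N n Ts ((\<chi>(4*K+4 := t)) k) * QQ Nt K s g n (\<chi>(4*K+4 := t)) k) = ?A"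
      by (rule sum.cong) (use QQ_upd in auto)
    then show ?thesis unfolding obs_form by (simp add: algebra_simps)
  qed
  then have "(\<lambda>t. obs N Nt K Ts s g n (\<chi>(4*K+4 := t))) = (\<lambda>t. ?A * EE N n Ts t + 0)"
    by auto
  then have "grad_obs N Nt K Ts s g n \<chi> (4*K+4) = ?A * (cc N n Ts * EE N n Ts (\<chi> (4*K+4)))"
    unfolding grad_obs_def
    by (simp only:) (rule cderiv_eq[OF affine_EE_deriv])
  then show ?thesis unfolding obs_form by (simp add: algebra_simps)
qed

lemma grad_rel:
  "grad_obs N Nt K Ts s g n \<chi> (4*K+4) = (\<Sum>k\<le>K. grad_obs N Nt K Ts s g n \<chi> k)"
  unfolding grad_dtau obs_form by (simp add: grad_tau sum_distrib_left sum_distrib_right algebra_simps)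

theorem proposition2:
  fixes N G Nt K :: nat and Ts \<sigma> :: real
    and s :: "nat \<Rightarrow> nat \<Rightarrow> nat \<Rightarrow> complex"
    and \<chi> :: "nat \<Rightarrow> real"
  assumes "N > 0" and "G > 0" and "Nt > 0" and "Ts > 0" and "\<sigma> > 0"
  shows "det (FIM N G Nt K Ts \<sigma> s \<chi>) = 0"
proof -
  let ?n = "4*K+6"
  let ?M = "FIM N G Nt K Ts \<sigma> s \<chi>"
  let ?g = "grad_obs N Nt K Ts s"
  define v :: "real vec" where "v = vec ?n (\<lambda>b. if b \<le> K then 1 else if b = 4*K+4 then -1 else 0)"
  have Mc: "?M \<in> carrier_mat ?n ?n" unfolding FIM_def by simp
  have vc: "v \<in> carrier_vec ?n" unfolding v_def by simp
  have v0: "v \<noteq> 0\<^sub>v ?n"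
  proof
    assume "v = 0\<^sub>v ?n"
    then have "v $ 0 = 0\<^sub>v ?n $ 0" by simp
    then show False unfolding v_def by simp
  qed
  have Mv: "?M *\<^sub>v v = 0\<^sub>v ?n"
  proof (rule eq_vecI)
    show "dim_vec (?M *\<^sub>v v) = dim_vec (0\<^sub>v ?n)" using Mc by simp
    fix a assume a: "a < dim_vec (0\<^sub>v ?n)"
    then have a': "a < ?n" by simp
    define m where "m b = ?M $$ (a, b)" for b
    have m_def': "m b = 2 / \<sigma>\<^sup>2 * (\<Sum>n<N. \<Sum>g\<in>{1..G}. Re (cnj (?g g n \<chi> a) * ?g g n \<chi> b))"
      if "b < ?n" for b
      using a' that unfolding m_def FIM_def by simp
    have "(?M *\<^sub>v v) $ a = (\<Sum>b<?n. m b * v $ b)"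
      using a' Mc unfolding m_def
      by (simp add: mult_mat_vec_def scalar_prod_def v_def atLeast0LessThan)
    also have "\<dots> = (\<Sum>b<?n. (if b \<le> K then m b else 0) + (if b = 4*K+4 then - m b else 0))"
      by (rule sum.cong) (auto simp: v_def)
    also have "\<dots> = (\<Sum>b\<le>K. m b) - m (4*K+4)"
    proof -
      have "(\<Sum>b<?n. (if b \<le> K then m b else 0)) = (\<Sum>b\<le>K. m b)"
      proof -
        have "(\<Sum>b<?n. (if b \<le> K then m b else 0)) = (\<Sum>b<?n. (if b \<in> {..K} then m b else 0))"
          by simp
        also have "\<dots> = sum m ({..<?n} \<inter> {..K})" by (simp only: sum.inter_restrict[OF finite_lessThan])
        also have "{..<?n} \<inter> {..K} = {..K}" by auto
        finally show ?thesis .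
      qed
      moreover have "(\<Sum>b<?n. (if b = 4*K+4 then - m b else 0)) = - m (4*K+4)"
        by (subst sum.delta) auto
      ultimately show ?thesis by (simp add: sum.distrib)
    qed
    also have "\<dots> = 0"
    proof -
      have "(\<Sum>b\<le>K. m b) = 2 / \<sigma>\<^sup>2 * (\<Sum>n<N. \<Sum>g\<in>{1..G}. \<Sum>b\<le>K. Re (cnj (?g g n \<chi> a) * ?g g n \<chi> b))"
        by (simp add: m_def' sum_distrib_left sum.swap[of _ "{..K}"])
      also have "\<dots> = m (4*K+4)"
        by (simp add: m_def' grad_rel sum_distrib_left)
      finally show ?thesis by simp
    qed
    finally show "(?M *\<^sub>v v) $ a = 0\<^sub>v ?n $ a" using a by simp
  qed
  show ?thesis using det_0_iff_vec_prod_zero[OF Mc] vc v0 Mv by blast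
qed

end
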